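(* Let $m\ge1$ be an integer. Then: (I) $\sup\{\min_{i\in[0:m]}G_i(\boldsymbol\beta): 0<\beta_1<\cdots<\beta_m<\infty\}=2+2\cos\left(\frac{2\pi}{2m+2}\right)$; (II) $\sup\{\min_{i\in[0:m]}G_i(\boldsymbol\beta): 0<\beta_1<\cdots<\beta_m=\infty\}=2+2\cos\left(\frac{2\pi}{2m+1}\right)$; (III) $\sup\{\min_{i\in[0:m]}G_i(\boldsymbol\beta): 0=\beta_1<\cdots<\beta_m<\infty\}=2+2\cos\left(\frac{2\pi}{2m+1}\right)$; (IV) if $m\ge2$, $\sup\{\min_{i\in[0:m]}G_i(\boldsymbol\beta): 0=\beta_1<\cdots<\beta_m=\infty\}=2+2\cos\left(\frac{2\pi}{2m}\right)$.
   Context: Variables $\beta_i$ take values in the extended half-line $[0,\infty]$ with the conventions $1/0=\infty$, $1/\infty=0$, $x+\infty=\infty$. For $\boldsymbol\beta=(\beta_1,\dots,\beta_m)$ define $G_0(\boldsymbol\beta)=1+\frac{1}{\beta_1}$, $G_i(\boldsymbol\beta)=2+\beta_i+\frac{1}{\beta_{i+1}}$ for $i\in[1:m-1]$, and $G_m(\boldsymbol\beta)=1+\beta_m$. (In the paper, $\sigma_{n,m}$ denotes these optimal values minus $2$.) *)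

theory Defs
  imports "HOL-Analysis.Analysis"
begin

text \<open>Variables beta_i live in [0,\<infinity>], modelled as extended reals (ereal);
  in ereal, 1/0 = \<infinity>, 1/\<infinity> = 0 and x + \<infinity> = \<infinity> (for x \<noteq> -\<infinity>).
  A vector beta = (beta_1,...,beta_m) is a function nat \<Rightarrow> ereal, only indices 1..m matter.\<close>

definition G :: "nat \<Rightarrow> (nat \<Rightarrow> ereal) \<Rightarrow> nat \<Rightarrow> ereal" where
  "G m \<beta> i = (if i = 0 then 1 + 1 / \<beta> 1
              else if i < m then 2 + \<beta> i + 1 / \<beta> (i + 1)
              else 1 + \<beta> m)"

definition minG :: "nat \<Rightarrow> (nat \<Rightarrow> ereal) \<Rightarrow> ereal" where
  "minG m \<beta> = Min (G m \<beta> ` {0..m})"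

definition strict_chain :: "nat \<Rightarrow> (nat \<Rightarrow> ereal) \<Rightarrow> bool" where
  "strict_chain m \<beta> \<longleftrightarrow> (\<forall>i\<in>{1..<m}. \<beta> i < \<beta> (i + 1))"

end

theory Submission imports Defs begin

definition Sf :: "real \<Rightarrow> real \<Rightarrow> real" where "Sf \<theta> t = sin (t * \<theta>)"
definition z :: "real \<Rightarrow> real \<Rightarrow> nat \<Rightarrow> real" where
  "z \<theta> a i = Sf \<theta> (real i + a) / Sf \<theta> (real i + a + 1)"

lemma Sf_rec: "Sf \<theta> (t + 1) + Sf \<theta> (t - 1) = 2 * cos \<theta> * Sf \<theta> t"
  unfolding Sf_def by (simp add: distrib_right left_diff_distrib sin_add sin_diff)

lemma Sf_pos: "0 < \<theta> \<Longrightarrow> 0 < t \<Longrightarrow> t * \<theta> < pi \<Longrightarrow> 0 < Sf \<theta> t"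
  unfolding Sf_def by (rule sin_gt_zero) auto

lemma Sf_sq: fixes A B :: real shows "sin (A - B) * sin (A + B) = (sin A)^2 - (sin B)^2"
proof -
  have "sin (A - B) * sin (A + B) = (sin A * cos B - cos A * sin B) * (sin A * cos B + cos A * sin B)"
    by (simp only: sin_add sin_diff)
  also have "\<dots> = (sin A * cos B)^2 - (cos A * sin B)^2" by (simp add: algebra_simps power2_eq_square)
  also have "\<dots> = (sin A)^2 * (cos B)^2 - (cos A)^2 * (sin B)^2" by (simp add: power_mult_distrib)
  also have "\<dots> = (sin A)^2 - (sin B)^2" unfolding cos_squared_eq by (simp add: algebra_simps)
  finally show ?thesis .
qed

lemma Sf_sq2: "Sf \<theta> (t - 1) * Sf \<theta> (t + 1) = (Sf \<theta> t)^2 - (sin \<theta>)^2"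
  unfolding Sf_def using Sf_sq[of "t*\<theta>" \<theta>] by (simp add: algebra_simps)

lemma z_rec: assumes "Sf \<theta> (real i + a + 1) \<noteq> 0"
  shows "z \<theta> a i + 1 / z \<theta> a (Suc i) = 2 * cos \<theta>"
proof -
  define u where "u = real i + a + 1"
  have e: "real (Suc i) + a = u" "real (Suc i) + a + 1 = u + 1" "real i + a = u - 1" "real i + a + 1 = u"
    unfolding u_def by auto
  have "z \<theta> a i + 1 / z \<theta> a (Suc i) = Sf \<theta> (u - 1) / Sf \<theta> u + Sf \<theta> (u + 1) / Sf \<theta> u"
    unfolding z_def e by simp
  also have "\<dots> = (Sf \<theta> (u + 1) + Sf \<theta> (u - 1)) / Sf \<theta> u" by (simp add: add_divide_distrib)
  also have "\<dots> = 2 * cos \<theta>" using Sf_rec[of \<theta> u] assms unfolding e(4)[symmetric] by simp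
  finally show ?thesis .
qed

lemma zm: fixes p q r :: real assumes "p*r < q*q" "0<p" "0<q" "0<r" shows "p/q < q/r"
  using assms by (simp add: divide_simps)

lemma z_mono: assumes "0 < Sf \<theta> (real i + a)" "0 < Sf \<theta> (real i + a + 1)" "0 < Sf \<theta> (real i + a + 2)"
  "sin \<theta> \<noteq> 0"
  shows "z \<theta> a i < z \<theta> a (Suc i)"
proof -
  have "Sf \<theta> ((real i + a + 1) - 1) * Sf \<theta> ((real i + a + 1) + 1) < (Sf \<theta> (real i + a + 1))^2"
    unfolding Sf_sq2 using assms(4) by simp
  moreover have "(real i + a + 1) - 1 = real i + a" "(real i + a + 1) + 1 = real i + a + 2" by simp_all
  ultimately have "Sf \<theta> (real i + a) * Sf \<theta> (real i + a + 2) < Sf \<theta> (real i + a + 1) * Sf \<theta> (real i + a + 1)"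
    by (simp add: power2_eq_square)
  moreover have "real (Suc i) + a = real i + a + 1" "real (Suc i) + a + 1 = real i + a + 2" by simp_all
  ultimately show ?thesis unfolding z_def using assms zm by metis
qed

lemma chain_cmp:
  fixes x y :: "nat \<Rightarrow> real"
  assumes "\<forall>j\<le>n. 0 < x j" "\<forall>j\<le>n. 0 < y j" "1 / y 0 < 1 / x 0"
    "\<forall>j<n. d < x j + 1 / x (Suc j)" "\<forall>j<n. y j + 1 / y (Suc j) = d"
  shows "x n < y n"
proof -
  have "j \<le> n \<Longrightarrow> x j < y j" for j
  proof (induction j)
    case 0 thus ?case using assms(1,2,3) by (auto simp: divide_simps)
  next
    case (Suc j)
    hence "x j < y j" by simp
    moreover have "d < x j + 1 / x (Suc j)" "y j + 1 / y (Suc j) = d" using Suc.prems assms by auto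
    ultimately have "1 / y (Suc j) < 1 / x (Suc j)" by linarith
    thus ?case using assms(1,2) Suc.prems by (auto simp: divide_simps)
  qed
  thus ?thesis by simp
qed

lemma chain_le: "strict_chain m \<beta> \<Longrightarrow> 1 \<le> i \<Longrightarrow> i < j \<Longrightarrow> j \<le> m \<Longrightarrow> \<beta> i < \<beta> j"
proof (induction j)
  case 0 thus ?case by simp
next
  case (Suc j)
  have j1: "j \<in> {1..<m}" using Suc.prems by auto
  have s: "\<beta> j < \<beta> (Suc j)" using Suc.prems(1) j1 unfolding strict_chain_def by auto
  show ?case
  proof (cases "i = j")
    case True thus ?thesis using s by simp
  next
    case False
    hence "\<beta> i < \<beta> j" using Suc by simp
    thus ?thesis using s by simp
  qed
qed

lemma ediv: "0 < p \<Longrightarrow> 1 / ereal p = ereal (1 / p)" by (simp add: divide_ereal_def one_ereal_def inverse_eq_divide)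

lemma Sf_posT: "0 < T \<Longrightarrow> 0 < t \<Longrightarrow> t < T \<Longrightarrow> 0 < Sf (pi / T) t"
  by (rule Sf_pos) (auto simp: field_simps)

lemma Sf_neg: "Sf \<theta> (- t) = - Sf \<theta> t" unfolding Sf_def by simp

lemma sup_char: fixes c :: ereal
  shows "c \<in> S \<Longrightarrow> (\<And>s. s \<in> S \<Longrightarrow> \<not> c < s) \<Longrightarrow> Sup S = c"
  by (metis Sup_eqI Sup_upper not_le_imp_less order.antisym)

lemma minG_gt: "c < minG m \<beta> \<Longrightarrow> i \<le> m \<Longrightarrow> c < G m \<beta> i"
  unfolding minG_def by auto

lemma minG_eq: "(\<And>i. i \<le> m \<Longrightarrow> c \<le> G m \<beta> i) \<Longrightarrow> k \<le> m \<Longrightarrow> G m \<beta> k = c \<Longrightarrow> minG m \<beta> = c"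
  unfolding minG_def by (rule Min_eqI) auto

lemma efin: "0 < (x::ereal) \<Longrightarrow> x < \<infinity> \<Longrightarrow> x = ereal (real_of_ereal x) \<and> 0 < real_of_ereal x"
  by (cases x) auto

lemma caseI: assumes m1: "m \<ge> 1" and th: "\<theta> = pi / (real m + 1)"
  shows "Sup {minG m \<beta> | \<beta>. 0 < \<beta> 1 \<and> strict_chain m \<beta> \<and> \<beta> m < \<infinity>} = ereal (2 + 2*cos \<theta>)"
proof -
  define d where "d = 2 * cos \<theta>"
  define y where "y = z \<theta> (-1/2)"
  have pos: "\<And>t. 0 < t \<Longrightarrow> t < real m + 1 \<Longrightarrow> 0 < Sf \<theta> t" unfolding th by (rule Sf_posT) auto
  have ypos: "0 < y i" if "1 \<le> i" "i \<le> m" for i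
  proof -
    have "0 < Sf \<theta> (real i + -1/2)" "0 < Sf \<theta> (real i + -1/2 + 1)" using that by (auto intro!: pos)
    thus ?thesis unfolding y_def z_def by simp
  qed
  have yrec: "y i + 1 / y (Suc i) = d" if "1 \<le> i" "i < m" for i
  proof -
    have "0 < Sf \<theta> (real i + -1/2 + 1)" using that by (auto intro!: pos)
    thus ?thesis unfolding y_def d_def by (intro z_rec) simp
  qed
  have sth: "sin \<theta> \<noteq> 0" using pos[of 1] m1 unfolding Sf_def by auto
  have ymono: "y i < y (Suc i)" if "1 \<le> i" "i < m" for i
  proof -
    have "0 < Sf \<theta> (real i + -1/2)" "0 < Sf \<theta> (real i + -1/2 + 1)" "0 < Sf \<theta> (real i + -1/2 + 2)"
      using that by (auto intro!: pos)
    thus ?thesis unfolding y_def using sth by (intro z_mono) auto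
  qed
  have y1: "1 / y 1 = d + 1"
  proof -
    have "Sf \<theta> (1/2 + 1) + Sf \<theta> (1/2 - 1) = d * Sf \<theta> (1/2)" unfolding d_def by (rule Sf_rec)
    moreover have "Sf \<theta> (1/2 - 1) = - Sf \<theta> (1/2)" using Sf_neg[of \<theta> "1/2"] by simp
    moreover have "0 < Sf \<theta> (1/2)" using m1 by (auto intro!: pos)
    ultimately show ?thesis unfolding y_def z_def by (simp add: field_simps)
  qed
  have ym: "y m = d + 1"
  proof -
    have "Sf \<theta> ((real m + 1/2) + 1) + Sf \<theta> ((real m + 1/2) - 1) = d * Sf \<theta> (real m + 1/2)" unfolding d_def by (rule Sf_rec)
    moreover have "Sf \<theta> ((real m + 1/2) + 1) = - Sf \<theta> (real m + 1/2)"
    proof -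
      have "(real m + 1/2 + 1) * \<theta> = 2 * pi - (real m + 1/2) * \<theta>" unfolding th by (simp add: field_simps)
      thus ?thesis unfolding Sf_def by simp
    qed
    moreover have "0 < Sf \<theta> (real m + 1/2)" using m1 by (auto intro!: pos)
    moreover have "real m + -1/2 = (real m + 1/2) - 1" "real m + -1/2 + 1 = real m + 1/2" by simp_all
    ultimately show ?thesis unfolding y_def z_def by (simp add: field_simps)
  qed
  show ?thesis
  proof (rule sup_char)
    define \<beta> where "\<beta> = (\<lambda>i. ereal (y i))"
    have G: "G m \<beta> i = ereal (2 + 2 * cos \<theta>)" if im: "i \<le> m" for i
    proof -
      consider "i = 0" | "1 \<le> i" "i < m" | "i = m" "i \<noteq> 0" using im m1 by (cases "i = 0"; cases "i < m") auto
      thus ?thesis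
      proof cases
        case 1 thus ?thesis using ypos[of 1] m1 y1 unfolding G_def \<beta>_def d_def by (simp add: ediv)
      next
        case 2 thus ?thesis using ypos[of "Suc i"] yrec[of i] unfolding G_def \<beta>_def d_def by (simp add: ediv)
      next
        case 3 thus ?thesis using ym unfolding G_def \<beta>_def d_def by simp
      qed
    qed
    have "minG m \<beta> = ereal (2 + 2 * cos \<theta>)" by (rule minG_eq[of m _ _ 0]) (auto simp: G)
    moreover have "0 < \<beta> 1" "\<beta> m < \<infinity>" using ypos[of 1] m1 unfolding \<beta>_def by auto
    moreover have "strict_chain m \<beta>" unfolding strict_chain_def \<beta>_def using ymono by auto
    ultimately show "ereal (2 + 2 * cos \<theta>) \<in> {minG m \<beta> | \<beta>. 0 < \<beta> 1 \<and> strict_chain m \<beta> \<and> \<beta> m < \<infinity>}"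
      by (intro CollectI exI[of _ \<beta>]) simp
  next
    fix s assume "s \<in> {minG m \<beta> | \<beta>. 0 < \<beta> 1 \<and> strict_chain m \<beta> \<and> \<beta> m < \<infinity>}"
    then obtain \<beta> where s: "s = minG m \<beta>" and b1: "0 < \<beta> 1" and ch: "strict_chain m \<beta>" and bm: "\<beta> m < \<infinity>" by blast
    show "\<not> ereal (2 + 2 * cos \<theta>) < s"
    proof
      assume "ereal (2 + 2 * cos \<theta>) < s"
      hence gt: "\<And>i. i \<le> m \<Longrightarrow> ereal (2 + d) < G m \<beta> i" using minG_gt s unfolding d_def by blast
      define r where "r = (\<lambda>i. real_of_ereal (\<beta> i))"
      have br: "\<beta> i = ereal (r i) \<and> 0 < r i" if "1 \<le> i" "i \<le> m" for i
      proof -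
        have "0 < \<beta> i" using b1 chain_le[OF ch, of 1 i] that by (cases "i = 1") auto
        moreover have "\<beta> i < \<infinity>" using bm chain_le[OF ch, of i m] that by (cases "i = m") auto
        ultimately show ?thesis unfolding r_def by (rule efin)
      qed
      have g0: "d + 1 < 1 / r 1" using gt[of 0] br[of 1] m1 unfolding G_def by (simp add: ediv)
      have gi: "d < r i + 1 / r (Suc i)" if "1 \<le> i" "i < m" for i
        using gt[of i] br[of i] br[of "Suc i"] that unfolding G_def by (simp add: ediv)
      have gm: "d + 1 < r m" using gt[of m] br[of m] m1 unfolding G_def by simp
      have "r (Suc (m - 1)) < y (Suc (m - 1))"
        by (rule chain_cmp[where d = d and x = "\<lambda>j. r (Suc j)" and y = "\<lambda>j. y (Suc j)"])
           (use m1 y1 g0 in \<open>auto intro: gi yrec simp: ypos br[THEN conjunct2]\<close>)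
      thus False using gm ym m1 by simp
    qed
  qed
qed

lemma caseII: assumes m2: "m \<ge> 2" and th: "\<theta> = pi / (real m + 1/2)"
  shows "Sup {minG m \<beta> | \<beta>. 0 < \<beta> 1 \<and> strict_chain m \<beta> \<and> \<beta> m = \<infinity>} = ereal (2 + 2*cos \<theta>)"
proof -
  define d where "d = 2 * cos \<theta>"
  define y where "y = z \<theta> (-1/2)"
  have pos: "\<And>t. 0 < t \<Longrightarrow> t < real m + 1/2 \<Longrightarrow> 0 < Sf \<theta> t" unfolding th by (rule Sf_posT) auto
  have ypos: "0 < y i" if "1 \<le> i" "i < m" for i
  proof -
    have "0 < Sf \<theta> (real i + -1/2)" "0 < Sf \<theta> (real i + -1/2 + 1)" using that by (auto intro!: pos)
    thus ?thesis unfolding y_def z_def by simp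
  qed
  have yrec: "y i + 1 / y (Suc i) = d" if "1 \<le> i" "i < m" for i
  proof -
    have "0 < Sf \<theta> (real i + -1/2 + 1)" using that by (auto intro!: pos)
    thus ?thesis unfolding y_def d_def by (intro z_rec) simp
  qed
  have sth: "sin \<theta> \<noteq> 0" using pos[of 1] m2 unfolding Sf_def by auto
  have ymono: "y i < y (Suc i)" if "1 \<le> i" "Suc i < m" for i
  proof -
    have "0 < Sf \<theta> (real i + -1/2)" "0 < Sf \<theta> (real i + -1/2 + 1)" "0 < Sf \<theta> (real i + -1/2 + 2)"
      using that by (auto intro!: pos)
    thus ?thesis unfolding y_def using sth by (intro z_mono) auto
  qed
  have y1: "1 / y 1 = d + 1"
  proof -
    have "Sf \<theta> (1/2 + 1) + Sf \<theta> (1/2 - 1) = d * Sf \<theta> (1/2)" unfolding d_def by (rule Sf_rec)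
    moreover have "Sf \<theta> (1/2 - 1) = - Sf \<theta> (1/2)" using Sf_neg[of \<theta> "1/2"] by simp
    moreover have "0 < Sf \<theta> (1/2)" using m2 by (auto intro!: pos)
    ultimately show ?thesis unfolding y_def z_def by (simp add: field_simps)
  qed
  have ym: "y (m - 1) = d"
  proof -
    have "Sf \<theta> ((real m - 1/2) + 1) + Sf \<theta> ((real m - 1/2) - 1) = d * Sf \<theta> (real m - 1/2)" unfolding d_def by (rule Sf_rec)
    moreover have "Sf \<theta> ((real m - 1/2) + 1) = 0"
    proof -
      have "(real m - 1/2 + 1) * \<theta> = pi" unfolding th by (simp add: field_simps)
      thus ?thesis unfolding Sf_def by simp
    qed
    moreover have "0 < Sf \<theta> (real m - 1/2)" using m2 by (auto intro!: pos)
    moreover have "real (m - 1) + -1/2 = (real m - 1/2) - 1" "real (m - 1) + -1/2 + 1 = real m - 1/2" using m2 by (simp_all add: of_nat_diff)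
    ultimately show ?thesis unfolding y_def z_def by (simp add: field_simps)
  qed
  show ?thesis
  proof (rule sup_char)
    define \<beta> where "\<beta> = (\<lambda>i. if i = m then \<infinity> else ereal (y i))"
    have G: "ereal (2 + 2 * cos \<theta>) \<le> G m \<beta> i" if im: "i \<le> m" for i
    proof -
      consider "i = 0" | "1 \<le> i" "Suc i < m" | "Suc i = m" "i \<noteq> 0" | "i = m" using im m2 by (cases "i = 0"; cases "Suc i < m"; cases "i = m") auto
      thus ?thesis
      proof cases
        case 1 thus ?thesis using ypos[of 1] m2 y1 unfolding G_def \<beta>_def d_def by (simp add: ediv)
      next
        case 2 thus ?thesis using ypos[of "Suc i"] yrec[of i] unfolding G_def \<beta>_def d_def by (simp add: ediv)
      next
        case 3 thus ?thesis using ym unfolding G_def \<beta>_def d_def by (auto simp: Suc_diff_Suc[symmetric])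
      next
        case 4 thus ?thesis using m2 unfolding G_def \<beta>_def by simp
      qed
    qed
    have G0: "G m \<beta> 0 = ereal (2 + 2 * cos \<theta>)" using ypos[of 1] m2 y1 unfolding G_def \<beta>_def d_def by (simp add: ediv)
    have "minG m \<beta> = ereal (2 + 2 * cos \<theta>)" by (rule minG_eq[of m _ _ 0]) (auto simp: G G0)
    moreover have "0 < \<beta> 1" "\<beta> m = \<infinity>" using ypos[of 1] m2 unfolding \<beta>_def by auto
    moreover have "strict_chain m \<beta>" unfolding strict_chain_def \<beta>_def using ymono by auto
    ultimately show "ereal (2 + 2 * cos \<theta>) \<in> {minG m \<beta> | \<beta>. 0 < \<beta> 1 \<and> strict_chain m \<beta> \<and> \<beta> m = \<infinity>}"
      by (intro CollectI exI[of _ \<beta>]) simp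
  next
    fix s assume "s \<in> {minG m \<beta> | \<beta>. 0 < \<beta> 1 \<and> strict_chain m \<beta> \<and> \<beta> m = \<infinity>}"
    then obtain \<beta> where s: "s = minG m \<beta>" and b1: "0 < \<beta> 1" and ch: "strict_chain m \<beta>" and bm: "\<beta> m = \<infinity>" by blast
    show "\<not> ereal (2 + 2 * cos \<theta>) < s"
    proof
      assume "ereal (2 + 2 * cos \<theta>) < s"
      hence gt: "\<And>i. i \<le> m \<Longrightarrow> ereal (2 + d) < G m \<beta> i" using minG_gt s unfolding d_def by blast
      define r where "r = (\<lambda>i. real_of_ereal (\<beta> i))"
      have br: "\<beta> i = ereal (r i) \<and> 0 < r i" if "1 \<le> i" "i < m" for i
      proof -
        have "0 < \<beta> i" using b1 chain_le[OF ch, of 1 i] that by (cases "i = 1") auto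
        moreover have "\<beta> i < \<infinity>" using bm chain_le[OF ch, of i m] that by auto
        ultimately show ?thesis unfolding r_def by (rule efin)
      qed
      have g0: "d + 1 < 1 / r 1" using gt[of 0] br[of 1] m2 unfolding G_def by (simp add: ediv)
      have gi: "d < r i + 1 / r (Suc i)" if "1 \<le> i" "Suc i < m" for i
        using gt[of i] br[of i] br[of "Suc i"] that unfolding G_def by (simp add: ediv)
      have gm: "d < r (m - 1)"
      proof -
        have e: "m - 1 + 1 = m" "m - 1 < m" "1 \<le> m - 1" "m - 1 \<noteq> 0" using m2 by auto
        have "G m \<beta> (m - 1) = 2 + \<beta> (m - 1) + 1 / \<beta> m" unfolding G_def using e by simp
        also have "\<dots> = ereal (2 + r (m - 1))" using br[OF e(3) e(2)] bm by simp
        finally show ?thesis using gt[of "m - 1"] by simp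
      qed
      have "r (Suc (m - 2)) < y (Suc (m - 2))"
        by (rule chain_cmp[where d = d and x = "\<lambda>j. r (Suc j)" and y = "\<lambda>j. y (Suc j)"])
           (use m2 y1 g0 in \<open>auto intro: gi yrec simp: ypos br[THEN conjunct2]\<close>)
      moreover have "Suc (m - 2) = m - 1" using m2 by simp
      ultimately show False using gm ym by simp
    qed
  qed
qed

lemma caseIII: assumes m2: "m \<ge> 2" and th: "\<theta> = pi / (real m + 1/2)"
  shows "Sup {minG m \<beta> | \<beta>. 0 = \<beta> 1 \<and> strict_chain m \<beta> \<and> \<beta> m < \<infinity>} = ereal (2 + 2*cos \<theta>)"
proof -
  define d where "d = 2 * cos \<theta>"
  define y where "y = z \<theta> (-1)"
  have pos: "\<And>t. 0 < t \<Longrightarrow> t < real m + 1/2 \<Longrightarrow> 0 < Sf \<theta> t" unfolding th by (rule Sf_posT) auto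
  have ypos: "0 < y i" if "2 \<le> i" "i \<le> m" for i
  proof -
    have "0 < Sf \<theta> (real i + -1)" "0 < Sf \<theta> (real i + -1 + 1)" using that by (auto intro!: pos)
    thus ?thesis unfolding y_def z_def by simp
  qed
  have yrec: "y i + 1 / y (Suc i) = d" if "2 \<le> i" "i < m" for i
  proof -
    have "0 < Sf \<theta> (real i + -1 + 1)" using that by (auto intro!: pos)
    thus ?thesis unfolding y_def d_def by (intro z_rec) simp
  qed
  have sth: "sin \<theta> \<noteq> 0" using pos[of 1] m2 unfolding Sf_def by auto
  have ymono: "y i < y (Suc i)" if "2 \<le> i" "i < m" for i
  proof -
    have "0 < Sf \<theta> (real i + -1)" "0 < Sf \<theta> (real i + -1 + 1)" "0 < Sf \<theta> (real i + -1 + 2)"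
      using that by (auto intro!: pos)
    thus ?thesis unfolding y_def using sth by (intro z_mono) auto
  qed
  have y1: "y 1 = 0" unfolding y_def z_def Sf_def by simp
  have y2: "1 / y 2 = d"
  proof -
    have "Sf \<theta> (1 + 1) + Sf \<theta> (1 - 1) = d * Sf \<theta> 1" unfolding d_def by (rule Sf_rec)
    moreover have "Sf \<theta> (1 - 1) = 0" unfolding Sf_def by simp
    moreover have "0 < Sf \<theta> 1" using m2 by (auto intro!: pos)
    ultimately show ?thesis unfolding y_def z_def by (simp add: field_simps)
  qed
  have ym: "y m = d + 1"
  proof -
    have "Sf \<theta> (real m + 1) + Sf \<theta> (real m - 1) = d * Sf \<theta> (real m)" unfolding d_def by (rule Sf_rec)
    moreover have "Sf \<theta> (real m + 1) = - Sf \<theta> (real m)"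
    proof -
      have "(real m + 1) * \<theta> = 2 * pi - real m * \<theta>" unfolding th by (simp add: field_simps)
      thus ?thesis unfolding Sf_def by simp
    qed
    moreover have "0 < Sf \<theta> (real m)" using m2 by (auto intro!: pos)
    ultimately show ?thesis unfolding y_def z_def by (simp add: field_simps)
  qed
  show ?thesis
  proof (rule sup_char)
    define \<beta> where "\<beta> = (\<lambda>i. ereal (y i))"
    have G: "G m \<beta> i = (if i = 0 then \<infinity> else ereal (2 + 2 * cos \<theta>))" if im: "i \<le> m" for i
    proof -
      consider "i = 0" | "i = 1" | "2 \<le> i" "i < m" | "i = m" using im m2 by (cases "i = 0"; cases "i = 1"; cases "i < m") auto
      thus ?thesis
      proof cases
        case 1 thus ?thesis using y1 unfolding G_def \<beta>_def by (simp add: divide_ereal_def)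
      next
        case 2 thus ?thesis using ypos[of 2] m2 y1 y2 unfolding G_def \<beta>_def d_def by (simp add: ediv numeral_2_eq_2)
      next
        case 3 thus ?thesis using ypos[of "Suc i"] yrec[of i] unfolding G_def \<beta>_def d_def by (simp add: ediv)
      next
        case 4 thus ?thesis using ym m2 unfolding G_def \<beta>_def d_def by simp
      qed
    qed
    have "minG m \<beta> = ereal (2 + 2 * cos \<theta>)" by (rule minG_eq[of m _ _ 1]) (use m2 in \<open>auto simp: G\<close>)
    moreover have "0 = \<beta> 1" "\<beta> m < \<infinity>" using y1 unfolding \<beta>_def by (auto simp: zero_ereal_def)
    moreover have "strict_chain m \<beta>"
      unfolding strict_chain_def
    proof
      fix i assume i: "i \<in> {1..<m}"
      show "\<beta> i < \<beta> (i + 1)"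
      proof (cases "i = 1")
        case True thus ?thesis using ypos[of 2] m2 y1 unfolding \<beta>_def by (simp add: numeral_2_eq_2)
      next
        case False thus ?thesis using ymono[of i] i unfolding \<beta>_def by auto
      qed
    qed
    ultimately show "ereal (2 + 2 * cos \<theta>) \<in> {minG m \<beta> | \<beta>. 0 = \<beta> 1 \<and> strict_chain m \<beta> \<and> \<beta> m < \<infinity>}"
      by (intro CollectI exI[of _ \<beta>]) simp
  next
    fix s assume "s \<in> {minG m \<beta> | \<beta>. 0 = \<beta> 1 \<and> strict_chain m \<beta> \<and> \<beta> m < \<infinity>}"
    then obtain \<beta> where s: "s = minG m \<beta>" and b1: "0 = \<beta> 1" and ch: "strict_chain m \<beta>" and bm: "\<beta> m < \<infinity>" by blast
    show "\<not> ereal (2 + 2 * cos \<theta>) < s"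
    proof
      assume "ereal (2 + 2 * cos \<theta>) < s"
      hence gt: "\<And>i. i \<le> m \<Longrightarrow> ereal (2 + d) < G m \<beta> i" using minG_gt s unfolding d_def by blast
      define r where "r = (\<lambda>i. real_of_ereal (\<beta> i))"
      have br: "\<beta> i = ereal (r i) \<and> 0 < r i" if "2 \<le> i" "i \<le> m" for i
      proof -
        have "0 < \<beta> i" using b1 chain_le[OF ch, of 1 i] that by auto
        moreover have "\<beta> i < \<infinity>" using bm chain_le[OF ch, of i m] that by (cases "i = m") auto
        ultimately show ?thesis unfolding r_def by (rule efin)
      qed
      have g0: "d < 1 / r 2"
      proof -
        have "G m \<beta> 1 = 2 + \<beta> 1 + 1 / \<beta> 2" unfolding G_def using m2 by (simp add: numeral_2_eq_2)
        also have "\<dots> = ereal (2 + 1 / r 2)" using br[of 2] m2 b1[symmetric] by (simp add: ediv)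
        finally show ?thesis using gt[of 1] m2 by simp
      qed
      have gi: "d < r i + 1 / r (Suc i)" if "2 \<le> i" "i < m" for i
        using gt[of i] br[of i] br[of "Suc i"] that unfolding G_def by (simp add: ediv)
      have gm: "d + 1 < r m" using gt[of m] br[of m] m2 unfolding G_def by simp
      have y2': "1 / y (Suc (Suc 0)) = d" and g0': "d < 1 / r (Suc (Suc 0))" using y2 g0 by (simp_all add: numeral_2_eq_2)
      have "r (Suc (Suc (m - 2))) < y (Suc (Suc (m - 2)))"
        proof (rule chain_cmp[where d = d and x = "\<lambda>j. r (Suc (Suc j))" and y = "\<lambda>j. y (Suc (Suc j))"])
        show "\<forall>j\<le>m - 2. 0 < r (Suc (Suc j))" using br m2 by auto
        show "\<forall>j\<le>m - 2. 0 < y (Suc (Suc j))" using ypos m2 by auto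
        show "1 / y (Suc (Suc 0)) < 1 / r (Suc (Suc 0))" using y2' g0' by simp
        show "\<forall>j<m - 2. d < r (Suc (Suc j)) + 1 / r (Suc (Suc (Suc j)))" using gi by auto
        show "\<forall>j<m - 2. y (Suc (Suc j)) + 1 / y (Suc (Suc (Suc j))) = d" using yrec by auto
      qed
      moreover have "Suc (Suc (m - 2)) = m" using m2 by simp
      ultimately show False using gm ym by simp
    qed
  qed
qed

lemma caseIV: assumes m3: "m \<ge> 3" and th: "\<theta> = pi / real m"
  shows "Sup {minG m \<beta> | \<beta>. 0 = \<beta> 1 \<and> strict_chain m \<beta> \<and> \<beta> m = \<infinity>} = ereal (2 + 2*cos \<theta>)"
proof -
  define d where "d = 2 * cos \<theta>"
  define y where "y = z \<theta> (-1)"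
  have pos: "\<And>t. 0 < t \<Longrightarrow> t < real m \<Longrightarrow> 0 < Sf \<theta> t" unfolding th by (rule Sf_posT) (use m3 in auto)
  have ypos: "0 < y i" if "2 \<le> i" "i < m" for i
  proof -
    have "0 < Sf \<theta> (real i + -1)" "0 < Sf \<theta> (real i + -1 + 1)" using that by (auto intro!: pos)
    thus ?thesis unfolding y_def z_def by simp
  qed
  have yrec: "y i + 1 / y (Suc i) = d" if "2 \<le> i" "i < m" for i
  proof -
    have "0 < Sf \<theta> (real i + -1 + 1)" using that by (auto intro!: pos)
    thus ?thesis unfolding y_def d_def by (intro z_rec) simp
  qed
  have sth: "sin \<theta> \<noteq> 0" using pos[of 1] m3 unfolding Sf_def by auto
  have ymono: "y i < y (Suc i)" if "2 \<le> i" "Suc i < m" for i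
  proof -
    have "0 < Sf \<theta> (real i + -1)" "0 < Sf \<theta> (real i + -1 + 1)" "0 < Sf \<theta> (real i + -1 + 2)"
      using that by (auto intro!: pos)
    thus ?thesis unfolding y_def using sth by (intro z_mono) auto
  qed
  have y1: "y 1 = 0" unfolding y_def z_def Sf_def by simp
  have y2: "1 / y 2 = d"
  proof -
    have "Sf \<theta> (1 + 1) + Sf \<theta> (1 - 1) = d * Sf \<theta> 1" unfolding d_def by (rule Sf_rec)
    moreover have "Sf \<theta> (1 - 1) = 0" unfolding Sf_def by simp
    moreover have "0 < Sf \<theta> 1" using m3 by (auto intro!: pos)
    ultimately show ?thesis unfolding y_def z_def by (simp add: field_simps)
  qed
  have ym: "y (m - 1) = d"
  proof -
    have "Sf \<theta> ((real m - 1) + 1) + Sf \<theta> ((real m - 1) - 1) = d * Sf \<theta> (real m - 1)" unfolding d_def by (rule Sf_rec)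
    moreover have "Sf \<theta> ((real m - 1) + 1) = 0"
    proof -
      have "(real m - 1 + 1) * \<theta> = pi" unfolding th using m3 by (simp add: field_simps)
      thus ?thesis unfolding Sf_def by simp
    qed
    moreover have "0 < Sf \<theta> (real m - 1)" using m3 by (auto intro!: pos)
    moreover have "real (m - 1) + -1 = (real m - 1) - 1" "real (m - 1) + -1 + 1 = real m - 1" using m3 by (simp_all add: of_nat_diff)
    ultimately show ?thesis unfolding y_def z_def by (simp add: field_simps)
  qed
  show ?thesis
  proof (rule sup_char)
    define \<beta> where "\<beta> = (\<lambda>i. if i = m then \<infinity> else ereal (y i))"
    have G: "ereal (2 + 2 * cos \<theta>) \<le> G m \<beta> i" if im: "i \<le> m" for i
    proof -
      consider "i = 0" | "i = 1" | "2 \<le> i" "Suc i < m" | "Suc i = m" "2 \<le> i" | "i = m"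
        using im m3 by (cases "i = 0"; cases "i = 1"; cases "Suc i < m"; cases "i = m") auto
      thus ?thesis
      proof cases
        case 1 thus ?thesis using y1 m3 unfolding G_def \<beta>_def by (simp add: divide_ereal_def)
      next
        case 2 thus ?thesis using ypos[of 2] m3 y1 y2 unfolding G_def \<beta>_def d_def by (simp add: ediv numeral_2_eq_2)
      next
        case 3 thus ?thesis using ypos[of "Suc i"] yrec[of i] unfolding G_def \<beta>_def d_def by (simp add: ediv)
      next
        case 4
        hence "y i = d" using ym by auto
        thus ?thesis using 4 m3 unfolding G_def \<beta>_def d_def by simp
      next
        case 5 thus ?thesis using m3 unfolding G_def \<beta>_def by simp
      qed
    qed
    have G1: "G m \<beta> 1 = ereal (2 + 2 * cos \<theta>)" using ypos[of 2] m3 y1 y2 unfolding G_def \<beta>_def d_def by (simp add: ediv numeral_2_eq_2)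
    have "minG m \<beta> = ereal (2 + 2 * cos \<theta>)" by (rule minG_eq[of m _ _ 1]) (use m3 G G1 in auto)
    moreover have "0 = \<beta> 1" "\<beta> m = \<infinity>" using y1 m3 unfolding \<beta>_def by (auto simp: zero_ereal_def)
    moreover have "strict_chain m \<beta>"
      unfolding strict_chain_def
    proof
      fix i assume i: "i \<in> {1..<m}"
      show "\<beta> i < \<beta> (i + 1)"
      proof (cases "i = 1")
        case True thus ?thesis using ypos[of 2] m3 y1 unfolding \<beta>_def by (simp add: numeral_2_eq_2)
      next
        case False thus ?thesis using ymono[of i] i unfolding \<beta>_def by auto
      qed
    qed
    ultimately show "ereal (2 + 2 * cos \<theta>) \<in> {minG m \<beta> | \<beta>. 0 = \<beta> 1 \<and> strict_chain m \<beta> \<and> \<beta> m = \<infinity>}"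
      by (intro CollectI exI[of _ \<beta>]) simp
  next
    fix s assume "s \<in> {minG m \<beta> | \<beta>. 0 = \<beta> 1 \<and> strict_chain m \<beta> \<and> \<beta> m = \<infinity>}"
    then obtain \<beta> where s: "s = minG m \<beta>" and b1: "0 = \<beta> 1" and ch: "strict_chain m \<beta>" and bm: "\<beta> m = \<infinity>" by blast
    show "\<not> ereal (2 + 2 * cos \<theta>) < s"
    proof
      assume "ereal (2 + 2 * cos \<theta>) < s"
      hence gt: "\<And>i. i \<le> m \<Longrightarrow> ereal (2 + d) < G m \<beta> i" using minG_gt s unfolding d_def by blast
      define r where "r = (\<lambda>i. real_of_ereal (\<beta> i))"
      have br: "\<beta> i = ereal (r i) \<and> 0 < r i" if "2 \<le> i" "i < m" for i
      proof -
        have "0 < \<beta> i" using b1 chain_le[OF ch, of 1 i] that by auto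
        moreover have "\<beta> i < \<infinity>" using bm chain_le[OF ch, of i m] that by auto
        ultimately show ?thesis unfolding r_def by (rule efin)
      qed
      have g0: "d < 1 / r 2"
      proof -
        have "G m \<beta> 1 = 2 + \<beta> 1 + 1 / \<beta> 2" unfolding G_def using m3 by (simp add: numeral_2_eq_2)
        also have "\<dots> = ereal (2 + 1 / r 2)" using br[of 2] m3 b1[symmetric] by (simp add: ediv)
        finally show ?thesis using gt[of 1] m3 by simp
      qed
      have gi: "d < r i + 1 / r (Suc i)" if "2 \<le> i" "Suc i < m" for i
        using gt[of i] br[of i] br[of "Suc i"] that unfolding G_def by (simp add: ediv)
      have gm: "d < r (m - 1)"
      proof -
        have e: "m - 1 + 1 = m" "m - 1 < m" "2 \<le> m - 1" "m - 1 \<noteq> 0" using m3 by auto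
        have "G m \<beta> (m - 1) = 2 + \<beta> (m - 1) + 1 / \<beta> m" unfolding G_def using e by simp
        also have "\<dots> = ereal (2 + r (m - 1))" using br[OF e(3) e(2)] bm by simp
        finally show ?thesis using gt[of "m - 1"] by simp
      qed
      have y2': "1 / y (Suc (Suc 0)) = d" and g0': "d < 1 / r (Suc (Suc 0))" using y2 g0 by (simp_all add: numeral_2_eq_2)
      have "r (Suc (Suc (m - 3))) < y (Suc (Suc (m - 3)))"
        proof (rule chain_cmp[where d = d and x = "\<lambda>j. r (Suc (Suc j))" and y = "\<lambda>j. y (Suc (Suc j))"])
        show "\<forall>j\<le>m - 3. 0 < r (Suc (Suc j))" using br m3 by auto
        show "\<forall>j\<le>m - 3. 0 < y (Suc (Suc j))" using ypos m3 by auto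
        show "1 / y (Suc (Suc 0)) < 1 / r (Suc (Suc 0))" using y2' g0' by simp
        show "\<forall>j<m - 3. d < r (Suc (Suc j)) + 1 / r (Suc (Suc (Suc j)))" using gi by auto
        show "\<forall>j<m - 3. y (Suc (Suc j)) + 1 / y (Suc (Suc (Suc j))) = d" using yrec by auto
      qed
      moreover have "Suc (Suc (m - 3)) = m - 1" using m3 by simp
      ultimately show False using gm ym by simp
    qed
  qed
qed

lemma c3: "ereal (2 + 2 * cos (2 * pi / (2 * real (1::nat) + 1))) = 1"
proof -
  have "2 * pi / (2 * real (1::nat) + 1) = 2 * pi / 3" by simp
  thus ?thesis using cos_120 by (simp add: one_ereal_def)
qed

lemma c4: "ereal (2 + 2 * cos (2 * pi / (2 * real (2::nat)))) = 2"
proof -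
  have "2 * pi / (2 * real (2::nat)) = pi / 2" by simp
  thus ?thesis by simp
qed

lemma specII: "Sup {minG 1 \<beta> | \<beta>. 0 < \<beta> 1 \<and> strict_chain 1 \<beta> \<and> \<beta> 1 = \<infinity>} = 1"
proof (rule sup_char)
  define \<beta> where "\<beta> = (\<lambda>i::nat. \<infinity>::ereal)"
  have "minG 1 \<beta> = 1" by (rule minG_eq[of 1 _ _ 0]) (auto simp: G_def \<beta>_def le_Suc_eq)
  moreover have "strict_chain 1 \<beta>" unfolding strict_chain_def by simp
  ultimately show "1 \<in> {minG 1 \<beta> | \<beta>. 0 < \<beta> 1 \<and> strict_chain 1 \<beta> \<and> \<beta> 1 = \<infinity>}"
    by (intro CollectI exI[of _ \<beta>]) (simp add: \<beta>_def)
next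
  fix s assume "s \<in> {minG 1 \<beta> | \<beta>. 0 < \<beta> 1 \<and> strict_chain 1 \<beta> \<and> \<beta> 1 = \<infinity>}"
  then obtain \<beta> where s: "s = minG 1 \<beta>" and bm: "\<beta> 1 = \<infinity>" by blast
  show "\<not> 1 < s"
  proof
    assume "1 < s" hence "1 < G 1 \<beta> 0" using minG_gt s by blast
    thus False using bm by (simp add: G_def)
  qed
qed

lemma specIII: "Sup {minG 1 \<beta> | \<beta>. 0 = \<beta> 1 \<and> strict_chain 1 \<beta> \<and> \<beta> 1 < \<infinity>} = 1"
proof (rule sup_char)
  define \<beta> where "\<beta> = (\<lambda>i::nat. 0::ereal)"
  have "minG 1 \<beta> = 1" by (rule minG_eq[of 1 _ _ 1]) (auto simp: G_def \<beta>_def le_Suc_eq divide_ereal_def)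
  moreover have "strict_chain 1 \<beta>" unfolding strict_chain_def by simp
  ultimately show "1 \<in> {minG 1 \<beta> | \<beta>. 0 = \<beta> 1 \<and> strict_chain 1 \<beta> \<and> \<beta> 1 < \<infinity>}"
    by (intro CollectI exI[of _ \<beta>]) (simp add: \<beta>_def)
next
  fix s assume "s \<in> {minG 1 \<beta> | \<beta>. 0 = \<beta> 1 \<and> strict_chain 1 \<beta> \<and> \<beta> 1 < \<infinity>}"
  then obtain \<beta> where s: "s = minG 1 \<beta>" and b1: "0 = \<beta> 1" by blast
  show "\<not> 1 < s"
  proof
    assume "1 < s" hence "1 < G 1 \<beta> 1" using minG_gt s by blast
    thus False using b1[symmetric] by (simp add: G_def)
  qed
qed

lemma specIV: "Sup {minG 2 \<beta> | \<beta>. 0 = \<beta> 1 \<and> strict_chain 2 \<beta> \<and> \<beta> 2 = \<infinity>} = 2"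
proof (rule sup_char)
  define \<beta> where "\<beta> = (\<lambda>i::nat. if i = 2 then \<infinity> else 0::ereal)"
  have "minG 2 \<beta> = 2" by (rule minG_eq[of 2 _ _ 1]) (auto simp: G_def \<beta>_def le_Suc_eq divide_ereal_def numeral_2_eq_2)
  moreover have "strict_chain 2 \<beta>" unfolding strict_chain_def \<beta>_def by (auto simp: numeral_2_eq_2)
  ultimately show "2 \<in> {minG 2 \<beta> | \<beta>. 0 = \<beta> 1 \<and> strict_chain 2 \<beta> \<and> \<beta> 2 = \<infinity>}"
    by (intro CollectI exI[of _ \<beta>]) (simp add: \<beta>_def)
next
  fix s assume "s \<in> {minG 2 \<beta> | \<beta>. 0 = \<beta> 1 \<and> strict_chain 2 \<beta> \<and> \<beta> 2 = \<infinity>}"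
  then obtain \<beta> where s: "s = minG 2 \<beta>" and b1: "0 = \<beta> 1" and bm: "\<beta> 2 = \<infinity>" by blast
  have "G 2 \<beta> 1 = 2" using b1[symmetric] bm by (simp add: G_def numeral_2_eq_2)
  show "\<not> 2 < s"
  proof
    assume "2 < s" hence "2 < G 2 \<beta> 1" using minG_gt s by fastforce
    thus False using \<open>G 2 \<beta> 1 = 2\<close> by simp
  qed
qed

theorem proposition2:
  fixes m :: nat
  assumes "m \<ge> 1"
  shows
    "(Sup {minG m \<beta> | \<beta>. 0 < \<beta> 1 \<and> strict_chain m \<beta> \<and> \<beta> m < \<infinity>}
       = ereal (2 + 2 * cos (2 * pi / (2 * real m + 2))))
   \<and> (Sup {minG m \<beta> | \<beta>. 0 < \<beta> 1 \<and> strict_chain m \<beta> \<and> \<beta> m = \<infinity>}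
       = ereal (2 + 2 * cos (2 * pi / (2 * real m + 1))))
   \<and> (Sup {minG m \<beta> | \<beta>. 0 = \<beta> 1 \<and> strict_chain m \<beta> \<and> \<beta> m < \<infinity>}
       = ereal (2 + 2 * cos (2 * pi / (2 * real m + 1))))
   \<and> (m \<ge> 2 \<longrightarrow>
     Sup {minG m \<beta> | \<beta>. 0 = \<beta> 1 \<and> strict_chain m \<beta> \<and> \<beta> m = \<infinity>}
       = ereal (2 + 2 * cos (2 * pi / (2 * real m))))"
proof (intro conjI impI)
  show "Sup {minG m \<beta> | \<beta>. 0 < \<beta> 1 \<and> strict_chain m \<beta> \<and> \<beta> m < \<infinity>}
       = ereal (2 + 2 * cos (2 * pi / (2 * real m + 2)))"
    by (rule caseI[OF assms]) (simp add: field_simps)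
  have e1: "2 * pi / (2 * real m + 1) = pi / (real m + 1/2)" by (simp add: field_simps)
  show "Sup {minG m \<beta> | \<beta>. 0 < \<beta> 1 \<and> strict_chain m \<beta> \<and> \<beta> m = \<infinity>}
       = ereal (2 + 2 * cos (2 * pi / (2 * real m + 1)))"
  proof (cases "m = 1")
    case True thus ?thesis using specII c3 by simp
  next
    case False thus ?thesis using assms by (intro caseII e1) auto
  qed
  show "Sup {minG m \<beta> | \<beta>. 0 = \<beta> 1 \<and> strict_chain m \<beta> \<and> \<beta> m < \<infinity>}
       = ereal (2 + 2 * cos (2 * pi / (2 * real m + 1)))"
  proof (cases "m = 1")
    case True thus ?thesis using specIII c3 by simp
  next
    case False thus ?thesis using assms by (intro caseIII e1) auto
  qed
  assume m2: "m \<ge> 2"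
  show "Sup {minG m \<beta> | \<beta>. 0 = \<beta> 1 \<and> strict_chain m \<beta> \<and> \<beta> m = \<infinity>}
       = ereal (2 + 2 * cos (2 * pi / (2 * real m)))"
  proof (cases "m = 2")
    case True thus ?thesis using specIV c4 by simp
  next
    case False thus ?thesis using m2 by (intro caseIV) (auto simp: field_simps)
  qed
qed

end
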